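(* Fix $\eta>0$ and $K\ge1$. Let $\hat\lambda$ be the output of the randomized message passing procedure run for $K$ iterations with the EMP update and block distribution uniform over $\{(e,i):e\in E,i\in e\}$. Then $$\mathbb{E}\sum_{e\in E,i\in e}\|S^{\hat\lambda}_{e,i}-\mu^{\hat\lambda}_i\|_1^2\le\frac{8m\eta\,(L(0)-\inf_\lambda L(\lambda))}{K}.$$
   Context: Let $G=(V,E)$ be a finite undirected graph with $n=|V|$, $m=|E|$, every vertex incident to at least one edge; $N_i=\{e\in E:i\in e\}$. $\chi$ is a finite label set with $d=|\chi|\ge2$. Costs $C_i\in\mathbb{R}^\chi$, $C_e\in\mathbb{R}^{\chi^2}$; for $e=\{i,j\}$, $x_e=(x_i,x_j)$, $(x_e)_i=x_i$. Dual variables $\lambda=(\lambda_{e,i}(x))\in\mathbb{R}^{2md}$ and $$L(\lambda)=\frac1\eta\sum_{i\in V}\log\sum_{x\in\chi}\exp\Big(-\eta C_i(x)+\eta\sum_{e\in N_i}\lambda_{e,i}(x)\Big)+\frac1\eta\sum_{e\in E}\log\sum_{x_e\in\chi^2}\exp\Big(-\eta C_e(x_e)-\eta\sum_{i\in e}\lambda_{e,i}((x_e)_i)\Big).$$ $\mu^\lambda_i$, $\mu^\lambda_e$ are the normalized distributions proportional to the exponentials inside the two sums; $S^\lambda_{e,i}(x)=\sum_{x_e:(x_e)_i=x}\mu^\lambda_e(x_e)$; slack $\nu^\lambda_{e,i}=S^\lambda_{e,i}-\mu^\lambda_i$. EMP update at block $(e,i)$: replace $\lambda_{e,i}(x)$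 by $\lambda_{e,i}(x)+\frac{1}{2\eta}\log(S^\lambda_{e,i}(x)/\mu^\lambda_i(x))$, other coordinates unchanged. Randomized message passing procedure: $\lambda^{(0)}=0$; for $k=0,\dots,K-1$, sample a block $b_k$ independently from the given distribution and let $\lambda^{(k+1)}$ be $\lambda^{(k)}$ with block $b_k$ updated by the update rule evaluated at $\lambda^{(k)}$; output $\hat\lambda\in\arg\min_{\lambda\in\{\lambda^{(0)},\dots,\lambda^{(K)}\}}\sum_{e\in E,i\in e}\|\nu^\lambda_{e,i}\|_1^2$. *)

theory Defs
  imports "HOL-Probability.Probability"
begin

text \<open>Graph: vertex set V, edge set E of 2-element subsets of V. A joint label x_e of an edge e is an assignment e \<rightarrow> X
 (element of PiE e (\<lambda>_. X)), so (x_e)_i = x_e i. Dual variables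
 lam e i x = \<lambda>_{e,i}(x).\<close>

definition Nbr :: "'v set set \<Rightarrow> 'v \<Rightarrow> 'v set set" where
  "Nbr E i = {e \<in> E. i \<in> e}"

definition Blocks :: "'v set set \<Rightarrow> ('v set \<times> 'v) set" where
  "Blocks E = {(e, i). e \<in> E \<and> i \<in> e}"

definition edge_labels :: "'l set \<Rightarrow> 'v set \<Rightarrow> ('v \<Rightarrow> 'l) set" where
  "edge_labels X e = PiE e (\<lambda>_. X)"

type_synonym ('v, 'l) dual = "'v set \<Rightarrow> 'v \<Rightarrow> 'l \<Rightarrow> real"

definition node_pot :: "real \<Rightarrow> 'v set set \<Rightarrow> ('v \<Rightarrow> 'l \<Rightarrow> real)
    \<Rightarrow> ('v, 'l) dual \<Rightarrow> 'v \<Rightarrow> 'l \<Rightarrow> real" where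
  "node_pot eta E CV lam i x =
     exp (- eta * CV i x + eta * (\<Sum>e\<in>Nbr E i. lam e i x))"

definition edge_pot :: "real \<Rightarrow> ('v set \<Rightarrow> ('v \<Rightarrow> 'l) \<Rightarrow> real)
    \<Rightarrow> ('v, 'l) dual \<Rightarrow> 'v set \<Rightarrow> ('v \<Rightarrow> 'l) \<Rightarrow> real" where
  "edge_pot eta CE lam e xe =
     exp (- eta * CE e xe - eta * (\<Sum>i\<in>e. lam e i (xe i)))"

definition Ldual :: "real \<Rightarrow> 'v set \<Rightarrow> 'v set set \<Rightarrow> 'l set \<Rightarrow> ('v \<Rightarrow> 'l \<Rightarrow> real)
    \<Rightarrow> ('v set \<Rightarrow> ('v \<Rightarrow> 'l) \<Rightarrow> real) \<Rightarrow> ('v, 'l) dual \<Rightarrow> real" where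
  "Ldual eta V E X CV CE lam =
     (1 / eta) * (\<Sum>i\<in>V. ln (\<Sum>x\<in>X. node_pot eta E CV lam i x))
   + (1 / eta) * (\<Sum>e\<in>E. ln (\<Sum>xe\<in>edge_labels X e. edge_pot eta CE lam e xe))"

definition mu_node :: "real \<Rightarrow> 'v set set \<Rightarrow> 'l set \<Rightarrow> ('v \<Rightarrow> 'l \<Rightarrow> real)
    \<Rightarrow> ('v, 'l) dual \<Rightarrow> 'v \<Rightarrow> 'l \<Rightarrow> real" where
  "mu_node eta E X CV lam i x =
     node_pot eta E CV lam i x / (\<Sum>y\<in>X. node_pot eta E CV lam i y)"

definition mu_edge :: "real \<Rightarrow> 'l set \<Rightarrow> ('v set \<Rightarrow> ('v \<Rightarrow> 'l) \<Rightarrow> real)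
    \<Rightarrow> ('v, 'l) dual \<Rightarrow> 'v set \<Rightarrow> ('v \<Rightarrow> 'l) \<Rightarrow> real" where
  "mu_edge eta X CE lam e xe =
     edge_pot eta CE lam e xe / (\<Sum>ye\<in>edge_labels X e. edge_pot eta CE lam e ye)"

definition Smarg :: "real \<Rightarrow> 'l set \<Rightarrow> ('v set \<Rightarrow> ('v \<Rightarrow> 'l) \<Rightarrow> real)
    \<Rightarrow> ('v, 'l) dual \<Rightarrow> 'v set \<Rightarrow> 'v \<Rightarrow> 'l \<Rightarrow> real" where
  "Smarg eta X CE lam e i x =
     (\<Sum>xe\<in>{xe \<in> edge_labels X e. xe i = x}. mu_edge eta X CE lam e xe)"

definition slack :: "real \<Rightarrow> 'v set set \<Rightarrow> 'l set \<Rightarrow> ('v \<Rightarrow> 'l \<Rightarrow> real)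
    \<Rightarrow> ('v set \<Rightarrow> ('v \<Rightarrow> 'l) \<Rightarrow> real) \<Rightarrow> ('v, 'l) dual \<Rightarrow> 'v set \<Rightarrow> 'v \<Rightarrow> 'l \<Rightarrow> real" where
  "slack eta E X CV CE lam e i x =
     Smarg eta X CE lam e i x - mu_node eta E X CV lam i x"

definition slack_obj :: "real \<Rightarrow> 'v set set \<Rightarrow> 'l set \<Rightarrow> ('v \<Rightarrow> 'l \<Rightarrow> real)
    \<Rightarrow> ('v set \<Rightarrow> ('v \<Rightarrow> 'l) \<Rightarrow> real) \<Rightarrow> ('v, 'l) dual \<Rightarrow> real" where
  "slack_obj eta E X CV CE lam =
     (\<Sum>(e, i)\<in>Blocks E. (\<Sum>x\<in>X. \<bar>slack eta E X CV CE lam e i x\<bar>)\<^sup>2)"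

definition emp_update :: "real \<Rightarrow> 'v set set \<Rightarrow> 'l set \<Rightarrow> ('v \<Rightarrow> 'l \<Rightarrow> real)
    \<Rightarrow> ('v set \<Rightarrow> ('v \<Rightarrow> 'l) \<Rightarrow> real) \<Rightarrow> ('v, 'l) dual \<Rightarrow> 'v set \<times> 'v \<Rightarrow> ('v, 'l) dual" where
  "emp_update eta E X CV CE lam b =
     (case b of (e, i) \<Rightarrow>
       lam(e := (lam e)(i := (\<lambda>x. lam e i x + 1 / (2 * eta) *
          ln (Smarg eta X CE lam e i x / mu_node eta E X CV lam i x)))))"

fun emp_run :: "real \<Rightarrow> 'v set set \<Rightarrow> 'l set \<Rightarrow> ('v \<Rightarrow> 'l \<Rightarrow> real)
    \<Rightarrow> ('v set \<Rightarrow> ('v \<Rightarrow> 'l) \<Rightarrow> real) \<Rightarrow> ('v, 'l) dual \<Rightarrow> ('v set \<times> 'v) list \<Rightarrow> ('v, 'l) dual" where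
  "emp_run eta E X CV CE lam [] = lam"
| "emp_run eta E X CV CE lam (b # bs) = emp_run eta E X CV CE (emp_update eta E X CV CE lam b) bs"

definition iterate :: "real \<Rightarrow> 'v set set \<Rightarrow> 'l set \<Rightarrow> ('v \<Rightarrow> 'l \<Rightarrow> real)
    \<Rightarrow> ('v set \<Rightarrow> ('v \<Rightarrow> 'l) \<Rightarrow> real) \<Rightarrow> ('v set \<times> 'v) list \<Rightarrow> nat \<Rightarrow> ('v, 'l) dual" where
  "iterate eta E X CV CE bs k = emp_run eta E X CV CE (\<lambda>_ _ _. 0) (take k bs)"

text \<open>Law of K i.i.d. uniform block draws: uniform on block sequences of length K.\<close>
definition block_seqs :: "'v set set \<Rightarrow> nat \<Rightarrow> ('v set \<times> 'v) list set" where
  "block_seqs E K = {bs. length bs = K \<and> set bs \<subseteq> Blocks E}"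

end

theory Submission
  imports Defs "HOL-Analysis.Analysis"
begin

lemma hellinger:
  fixes S mu :: "'l \<Rightarrow> real"
  assumes fin: "finite X" and Sp: "\<forall>x\<in>X. S x > 0" and mp: "\<forall>x\<in>X. mu x > 0"
    and S1: "sum S X = 1" and m1: "sum mu X = 1"
  shows "(\<Sum>x\<in>X. sqrt (S x) * sqrt (mu x)) > 0"
    and "(\<Sum>x\<in>X. \<bar>S x - mu x\<bar>)\<^sup>2 \<le> -8 * ln (\<Sum>x\<in>X. sqrt (S x) * sqrt (mu x))"
proof -
  define B where "B = (\<Sum>x\<in>X. sqrt (S x) * sqrt (mu x))"
  have Xne: "X \<noteq> {}" using S1 by auto
  show Bp: "B > 0" unfolding B_def
    by (rule sum_pos[OF fin Xne]) (use Sp mp in auto)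
  have ab: "\<bar>S x - mu x\<bar> = \<bar>sqrt (S x) - sqrt (mu x)\<bar> * (sqrt (S x) + sqrt (mu x))" if "x \<in> X" for x
  proof -
    have "S x - mu x = (sqrt (S x) - sqrt (mu x)) * (sqrt (S x) + sqrt (mu x))"
      using Sp mp that by (simp add: algebra_simps less_imp_le)
    moreover have "sqrt (S x) + sqrt (mu x) \<ge> 0" using Sp mp that by (simp add: less_imp_le)
    ultimately show ?thesis by (simp add: abs_mult)
  qed
  have "(\<Sum>x\<in>X. \<bar>S x - mu x\<bar>)\<^sup>2 = (\<Sum>x\<in>X. \<bar>sqrt (S x) - sqrt (mu x)\<bar> * (sqrt (S x) + sqrt (mu x)))\<^sup>2"
    using ab by (simp cong: sum.cong)
  also have "\<dots> \<le> (\<Sum>x\<in>X. (\<bar>sqrt (S x) - sqrt (mu x)\<bar>)\<^sup>2) * (\<Sum>x\<in>X. (sqrt (S x) + sqrt (mu x))\<^sup>2)"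
    by (rule Cauchy_Schwarz_ineq_sum)
  also have "(\<Sum>x\<in>X. (\<bar>sqrt (S x) - sqrt (mu x)\<bar>)\<^sup>2) = (\<Sum>x\<in>X. S x + mu x - 2 * (sqrt (S x) * sqrt (mu x)))"
    using Sp mp by (intro sum.cong) (auto simp: power2_eq_square algebra_simps less_imp_le)
  also have "\<dots> = 2 - 2 * B" using S1 m1 by (simp add: sum.distrib sum_subtractf B_def sum_distrib_left)
  also have "(\<Sum>x\<in>X. (sqrt (S x) + sqrt (mu x))\<^sup>2) = (\<Sum>x\<in>X. S x + mu x + 2 * (sqrt (S x) * sqrt (mu x)))"
    using Sp mp by (intro sum.cong) (auto simp: power2_eq_square algebra_simps less_imp_le)
  also have "\<dots> = 2 + 2 * B" using S1 m1 by (simp add: sum.distrib B_def sum_distrib_left)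
  also have "(2 - 2 * B) * (2 + 2 * B) \<le> 8 * (1 - B)"
    using zero_le_power2[of "1 - B"] by (simp add: power2_eq_square algebra_simps)
  also have "\<dots> \<le> -8 * ln B" using ln_le_minus_one[OF Bp] by (simp add: algebra_simps)
  finally show "(\<Sum>x\<in>X. \<bar>S x - mu x\<bar>)\<^sup>2 \<le> -8 * ln (\<Sum>x\<in>X. sqrt (S x) * sqrt (mu x))"
    unfolding B_def .
qed


lemma emp_step:
  assumes finV: "finite V" and finE: "finite E" and eV: "\<forall>e\<in>E. e \<subseteq> V"
    and finX: "finite X" and Xne: "X \<noteq> {}" and eta: "eta > 0"
    and eE: "e \<in> E" and ie: "i \<in> e"
  shows "Ldual eta V E X CV CE (emp_update eta E X CV CE lam (e, i))
     \<le> Ldual eta V E X CV CE lam - (\<Sum>x\<in>X. \<bar>slack eta E X CV CE lam e i x\<bar>)\<^sup>2 / (4 * eta)"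
proof -
  define S where "S = Smarg eta X CE lam e i"
  define mu where "mu = mu_node eta E X CV lam i"
  define lam' where "lam' = emp_update eta E X CV CE lam (e, i)"
  define d where "d = (\<lambda>x. 1 / (2 * eta) * ln (S x / mu x))"
  have lam'2: "lam' = lam(e := (lam e)(i := (\<lambda>x. lam e i x + d x)))"
    by (simp add: lam'_def emp_update_def S_def mu_def d_def)
  have fine: "finite e" using eE eV finV finite_subset by blast
  have iV: "i \<in> V" using eE eV ie by blast
  have finEL: "finite (edge_labels X e)" unfolding edge_labels_def using fine finX by (simp add: finite_PiE)
  have rest: "restrict (\<lambda>_. x) e \<in> edge_labels X e" if "x \<in> X" for x
    using that by (simp add: edge_labels_def)
  obtain x0 where x0: "x0 \<in> X" using Xne by blast
  define Zi where "Zi = (\<Sum>x\<in>X. node_pot eta E CV lam i x)"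
  define Ze where "Ze = (\<Sum>xe\<in>edge_labels X e. edge_pot eta CE lam e xe)"
  have Zi: "Zi > 0" unfolding Zi_def by (rule sum_pos[OF finX Xne]) (simp add: node_pot_def)
  have Ze: "Ze > 0" unfolding Ze_def
    by (rule sum_pos[OF finEL]) (use rest[OF x0] in \<open>auto simp: edge_pot_def\<close>)
  have mu_eq: "mu x = node_pot eta E CV lam i x / Zi" for x by (simp add: mu_def mu_node_def Zi_def)
  have mue_eq: "mu_edge eta X CE lam e xe = edge_pot eta CE lam e xe / Ze" for xe
    by (simp add: mu_edge_def Ze_def)
  have mupos: "mu x > 0" for x
    unfolding mu_eq using Zi by (simp add: node_pot_def)
  have mu1: "sum mu X = 1"
    unfolding mu_eq using Zi by (simp add: Zi_def[symmetric] sum_divide_distrib[symmetric])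
  have mue_pos: "mu_edge eta X CE lam e xe > 0" for xe
    unfolding mue_eq using Ze by (simp add: edge_pot_def)
  have Spos: "S x > 0" if "x \<in> X" for x
    unfolding S_def Smarg_def
    by (rule sum_pos) (use finEL rest[OF that] mue_pos ie in \<open>auto intro!: exI[of _ "restrict (\<lambda>_. x) e"]\<close>)
  have grp: "(\<Sum>x\<in>X. \<Sum>xe\<in>{xe \<in> edge_labels X e. xe i = x}. h xe) = (\<Sum>xe\<in>edge_labels X e. h xe)" for h
    by (rule sum.group[OF finEL finX]) (use ie in \<open>auto simp: edge_labels_def\<close>)
  have S1: "sum S X = 1"
    unfolding S_def Smarg_def grp unfolding mue_eq using Ze
    by (simp add: sum_divide_distrib[symmetric] Ze_def[symmetric])
  define B where "B = (\<Sum>x\<in>X. sqrt (S x) * sqrt (mu x))"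
  have hel: "B > 0" "(\<Sum>x\<in>X. \<bar>S x - mu x\<bar>)\<^sup>2 \<le> -8 * ln B"
    using hellinger[OF finX _ _ S1 mu1] Spos mupos unfolding B_def by auto
  have t: "exp (eta * d x) = sqrt (S x) / sqrt (mu x)" if "x \<in> X" for x
  proof -
    have "eta * d x = 1/2 * ln (S x / mu x)" using eta by (simp add: d_def)
    then have "exp (eta * d x) = (S x / mu x) powr (1/2)"
      using Spos[OF that] mupos[of x] by (simp add: powr_def)
    also have "\<dots> = sqrt (S x / mu x)" using Spos[OF that] mupos[of x] by (simp add: powr_half_sqrt)
    finally show ?thesis by (simp add: real_sqrt_divide)
  qed
  have finN: "finite (Nbr E i)" using finE by (simp add: Nbr_def)
  have eN: "e \<in> Nbr E i" using eE ie by (simp add: Nbr_def)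
  have np_other: "node_pot eta E CV lam' j x = node_pot eta E CV lam j x" if "j \<noteq> i" for j x
    unfolding node_pot_def lam'2 using that by (auto intro!: sum.cong)
  have np_i: "node_pot eta E CV lam' i x = node_pot eta E CV lam i x * exp (eta * d x)" for x
  proof -
    have "(\<Sum>e'\<in>Nbr E i. lam' e' i x) = lam' e i x + (\<Sum>e'\<in>Nbr E i - {e}. lam' e' i x)"
      by (rule sum.remove[OF finN eN])
    also have "(\<Sum>e'\<in>Nbr E i - {e}. lam' e' i x) = (\<Sum>e'\<in>Nbr E i - {e}. lam e' i x)"
      unfolding lam'2 by (auto intro!: sum.cong)
    also have "lam' e i x = lam e i x + d x" by (simp add: lam'2)
    also have "lam e i x + d x + (\<Sum>e'\<in>Nbr E i - {e}. lam e' i x) = (\<Sum>e'\<in>Nbr E i. lam e' i x) + d x"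
      using sum.remove[OF finN eN, of "\<lambda>e'. lam e' i x"] by simp
    finally show ?thesis unfolding node_pot_def by (simp add: distrib_left exp_add[symmetric] algebra_simps)
  qed
  have ep_other: "edge_pot eta CE lam' e' xe = edge_pot eta CE lam e' xe" if "e' \<noteq> e" for e' xe
    unfolding edge_pot_def lam'2 using that by simp
  have ep_e: "edge_pot eta CE lam' e xe = edge_pot eta CE lam e xe * exp (- (eta * d (xe i)))" for xe
  proof -
    have "(\<Sum>j\<in>e. lam' e j (xe j)) = lam' e i (xe i) + (\<Sum>j\<in>e - {i}. lam' e j (xe j))"
      by (rule sum.remove[OF fine ie])
    also have "(\<Sum>j\<in>e - {i}. lam' e j (xe j)) = (\<Sum>j\<in>e - {i}. lam e j (xe j))"
      unfolding lam'2 by (auto intro!: sum.cong)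
    also have "lam' e i (xe i) = lam e i (xe i) + d (xe i)" by (simp add: lam'2)
    also have "lam e i (xe i) + d (xe i) + (\<Sum>j\<in>e - {i}. lam e j (xe j)) = (\<Sum>j\<in>e. lam e j (xe j)) + d (xe i)"
      using sum.remove[OF fine ie, of "\<lambda>j. lam e j (xe j)"] by simp
    finally show ?thesis unfolding edge_pot_def by (simp add: distrib_left exp_add[symmetric] algebra_simps)
  qed
  have Zi': "(\<Sum>x\<in>X. node_pot eta E CV lam' i x) = Zi * B"
  proof -
    have "(\<Sum>x\<in>X. node_pot eta E CV lam' i x) = (\<Sum>x\<in>X. Zi * (sqrt (S x) * sqrt (mu x)))"
    proof (rule sum.cong)
      fix x assume x: "x \<in> X"
      have "node_pot eta E CV lam i x = Zi * mu x"
        unfolding mu_eq using Zi by simp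
      moreover have "mu x = sqrt (mu x) * sqrt (mu x)" using mupos[of x] by (simp add: less_imp_le)
      ultimately show "node_pot eta E CV lam' i x = Zi * (sqrt (S x) * sqrt (mu x))"
        unfolding np_i t[OF x] using mupos[of x] by (simp add: field_simps)
    qed simp
    then show ?thesis by (simp add: B_def sum_distrib_left)
  qed
  have Ze': "(\<Sum>xe\<in>edge_labels X e. edge_pot eta CE lam' e xe) = Ze * B"
  proof -
    define c where "c = (\<lambda>x. sqrt (mu x) / sqrt (S x))"
    have "(\<Sum>xe\<in>edge_labels X e. edge_pot eta CE lam' e xe)
       = (\<Sum>xe\<in>edge_labels X e. Ze * (mu_edge eta X CE lam e xe * c (xe i)))"
    proof (rule sum.cong)
      fix xe assume xe: "xe \<in> edge_labels X e"
      have xi: "xe i \<in> X" using xe ie by (auto simp: edge_labels_def)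
      have "edge_pot eta CE lam e xe = Ze * mu_edge eta X CE lam e xe"
        unfolding mue_eq using Ze by simp
      moreover have "exp (- (eta * d (xe i))) = c (xe i)"
        using t[OF xi] Spos[OF xi] mupos[of "xe i"] by (simp add: exp_minus c_def)
      ultimately show "edge_pot eta CE lam' e xe = Ze * (mu_edge eta X CE lam e xe * c (xe i))"
        unfolding ep_e by simp
    qed simp
    also have "\<dots> = Ze * (\<Sum>x\<in>X. \<Sum>xe\<in>{xe \<in> edge_labels X e. xe i = x}. mu_edge eta X CE lam e xe * c (xe i))"
      unfolding grp[of "\<lambda>xe. mu_edge eta X CE lam e xe * c (xe i)"] by (simp add: sum_distrib_left)
    also have "(\<Sum>x\<in>X. \<Sum>xe\<in>{xe \<in> edge_labels X e. xe i = x}. mu_edge eta X CE lam e xe * c (xe i))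
       = (\<Sum>x\<in>X. S x * c x)"
      unfolding S_def Smarg_def by (auto simp: sum_distrib_right intro!: sum.cong)
    also have "\<dots> = B" unfolding B_def c_def
    proof (rule sum.cong)
      fix x assume x: "x \<in> X"
      have "S x = sqrt (S x) * sqrt (S x)" using Spos[OF x] by (simp add: less_imp_le)
      then show "S x * (sqrt (mu x) / sqrt (S x)) = sqrt (S x) * sqrt (mu x)"
        using Spos[OF x] by (simp add: field_simps)
    qed simp
    finally show ?thesis .
  qed
  have nodes: "(\<Sum>j\<in>V. ln (\<Sum>x\<in>X. node_pot eta E CV lam' j x))
      = (\<Sum>j\<in>V. ln (\<Sum>x\<in>X. node_pot eta E CV lam j x)) + ln B"
  proof -
    have "(\<Sum>j\<in>V. ln (\<Sum>x\<in>X. node_pot eta E CV lam' j x))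
       = ln (\<Sum>x\<in>X. node_pot eta E CV lam' i x) + (\<Sum>j\<in>V-{i}. ln (\<Sum>x\<in>X. node_pot eta E CV lam' j x))"
      by (rule sum.remove[OF finV iV])
    also have "(\<Sum>j\<in>V-{i}. ln (\<Sum>x\<in>X. node_pot eta E CV lam' j x)) = (\<Sum>j\<in>V-{i}. ln (\<Sum>x\<in>X. node_pot eta E CV lam j x))"
      using np_other by (auto intro!: sum.cong)
    also have "ln (\<Sum>x\<in>X. node_pot eta E CV lam' i x) = ln Zi + ln B"
      using Zi' Zi hel(1) by (simp add: ln_mult)
    finally show ?thesis using sum.remove[OF finV iV, of "\<lambda>j. ln (\<Sum>x\<in>X. node_pot eta E CV lam j x)"]
      by (simp add: Zi_def)
  qed
  have edges: "(\<Sum>e'\<in>E. ln (\<Sum>xe\<in>edge_labels X e'. edge_pot eta CE lam' e' xe))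
      = (\<Sum>e'\<in>E. ln (\<Sum>xe\<in>edge_labels X e'. edge_pot eta CE lam e' xe)) + ln B"
  proof -
    have "(\<Sum>e'\<in>E. ln (\<Sum>xe\<in>edge_labels X e'. edge_pot eta CE lam' e' xe))
       = ln (\<Sum>xe\<in>edge_labels X e. edge_pot eta CE lam' e xe) + (\<Sum>e'\<in>E-{e}. ln (\<Sum>xe\<in>edge_labels X e'. edge_pot eta CE lam' e' xe))"
      by (rule sum.remove[OF finE eE])
    also have "(\<Sum>e'\<in>E-{e}. ln (\<Sum>xe\<in>edge_labels X e'. edge_pot eta CE lam' e' xe)) = (\<Sum>e'\<in>E-{e}. ln (\<Sum>xe\<in>edge_labels X e'. edge_pot eta CE lam e' xe))"
      using ep_other by (auto intro!: sum.cong)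
    also have "ln (\<Sum>xe\<in>edge_labels X e. edge_pot eta CE lam' e xe) = ln Ze + ln B"
      using Ze' Ze hel(1) by (simp add: ln_mult)
    finally show ?thesis using sum.remove[OF finE eE, of "\<lambda>e'. ln (\<Sum>xe\<in>edge_labels X e'. edge_pot eta CE lam e' xe)"]
      by (simp add: Ze_def)
  qed
  have L': "Ldual eta V E X CV CE lam' = Ldual eta V E X CV CE lam + 2 / eta * ln B"
    unfolding Ldual_def nodes edges by (simp add: add_divide_distrib)
  have sl: "(\<Sum>x\<in>X. \<bar>slack eta E X CV CE lam e i x\<bar>) = (\<Sum>x\<in>X. \<bar>S x - mu x\<bar>)"
    by (simp add: slack_def S_def mu_def)
  have "(\<Sum>x\<in>X. \<bar>S x - mu x\<bar>)\<^sup>2 / (4 * eta) \<le> -8 * ln B / (4 * eta)"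
    using hel(2) eta by (intro divide_right_mono) auto
  also have "\<dots> = - (2 / eta * ln B)" using eta by (simp add: field_simps)
  finally show ?thesis unfolding lam'_def[symmetric] L' sl by simp
qed


lemma Ldual_lower:
  assumes finV: "finite V" and finE: "finite E" and eV: "\<forall>e\<in>E. e \<subseteq> V"
    and finX: "finite X" and x0: "x0 \<in> X" and eta: "eta > 0"
  shows "Ldual eta V E X CV CE lam \<ge>
     (\<Sum>j\<in>V. - CV j x0) + (\<Sum>e\<in>E. - CE e (restrict (\<lambda>_. x0) e))"
proof -
  define P where "P = (\<Sum>e\<in>E. \<Sum>j\<in>e. lam e j x0)"
  have dc: "(\<Sum>j\<in>V. \<Sum>e\<in>Nbr E j. lam e j x0) = P"
  proof -
    have "(\<Sum>j\<in>V. \<Sum>e\<in>Nbr E j. lam e j x0) = (\<Sum>e\<in>E. \<Sum>j\<in>{j. j \<in> V \<and> j \<in> e}. lam e j x0)"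
      unfolding Nbr_def by (rule sum.swap_restrict[OF finV finE])
    also have "\<dots> = P" unfolding P_def
      using eV by (intro sum.cong refl) (auto intro!: sum.cong)
    finally show ?thesis .
  qed
  have n1: "ln (\<Sum>x\<in>X. node_pot eta E CV lam j x) \<ge> - eta * CV j x0 + eta * (\<Sum>e\<in>Nbr E j. lam e j x0)" for j
  proof -
    have "node_pot eta E CV lam j x0 \<le> (\<Sum>x\<in>X. node_pot eta E CV lam j x)"
      by (rule member_le_sum[OF x0 _ finX]) (simp add: node_pot_def)
    then have "ln (node_pot eta E CV lam j x0) \<le> ln (\<Sum>x\<in>X. node_pot eta E CV lam j x)"
      by (rule ln_mono) (simp add: node_pot_def)
    then show ?thesis by (simp add: node_pot_def)
  qed
  have e1: "ln (\<Sum>xe\<in>edge_labels X e. edge_pot eta CE lam e xe) \<ge> - eta * CE e (restrict (\<lambda>_. x0) e) - eta * (\<Sum>j\<in>e. lam e j x0)"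
    if eE: "e \<in> E" for e
  proof -
    have fine: "finite e" using eE eV finV finite_subset by blast
    have r: "restrict (\<lambda>_. x0) e \<in> edge_labels X e" using x0 by (simp add: edge_labels_def)
    have finEL: "finite (edge_labels X e)" unfolding edge_labels_def using fine finX by (simp add: finite_PiE)
    have "edge_pot eta CE lam e (restrict (\<lambda>_. x0) e) \<le> (\<Sum>xe\<in>edge_labels X e. edge_pot eta CE lam e xe)"
      by (rule member_le_sum[OF r _ finEL]) (simp add: edge_pot_def)
    then have "ln (edge_pot eta CE lam e (restrict (\<lambda>_. x0) e)) \<le> ln (\<Sum>xe\<in>edge_labels X e. edge_pot eta CE lam e xe)"
      by (rule ln_mono) (simp add: edge_pot_def)
    moreover have "(\<Sum>j\<in>e. lam e j (restrict (\<lambda>_. x0) e j)) = (\<Sum>j\<in>e. lam e j x0)" by simp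
    ultimately show ?thesis by (simp add: edge_pot_def)
  qed
  have A: "(\<Sum>j\<in>V. ln (\<Sum>x\<in>X. node_pot eta E CV lam j x)) \<ge> eta * (\<Sum>j\<in>V. - CV j x0) + eta * P"
  proof -
    have "(\<Sum>j\<in>V. ln (\<Sum>x\<in>X. node_pot eta E CV lam j x)) \<ge> (\<Sum>j\<in>V. - eta * CV j x0 + eta * (\<Sum>e\<in>Nbr E j. lam e j x0))"
      by (rule sum_mono) (rule n1)
    moreover have "(\<Sum>j\<in>V. - eta * CV j x0 + eta * (\<Sum>e\<in>Nbr E j. lam e j x0))
       = (\<Sum>j\<in>V. - eta * CV j x0) + (\<Sum>j\<in>V. eta * (\<Sum>e\<in>Nbr E j. lam e j x0))"
      by (rule sum.distrib)
    moreover have "(\<Sum>j\<in>V. - eta * CV j x0) = eta * (\<Sum>j\<in>V. - CV j x0)"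
      by (simp add: sum_distrib_left)
    moreover have "(\<Sum>j\<in>V. eta * (\<Sum>e\<in>Nbr E j. lam e j x0)) = eta * P"
      by (simp add: sum_distrib_left[symmetric] dc)
    ultimately show ?thesis by simp
  qed
  have Bd: "(\<Sum>e\<in>E. ln (\<Sum>xe\<in>edge_labels X e. edge_pot eta CE lam e xe)) \<ge> eta * (\<Sum>e\<in>E. - CE e (restrict (\<lambda>_. x0) e)) - eta * P"
  proof -
    have "(\<Sum>e\<in>E. ln (\<Sum>xe\<in>edge_labels X e. edge_pot eta CE lam e xe)) \<ge> (\<Sum>e\<in>E. - eta * CE e (restrict (\<lambda>_. x0) e) - eta * (\<Sum>j\<in>e. lam e j x0))"
      by (rule sum_mono) (rule e1)
    moreover have "(\<Sum>e\<in>E. - eta * CE e (restrict (\<lambda>_. x0) e) - eta * (\<Sum>j\<in>e. lam e j x0))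
       = (\<Sum>e\<in>E. - eta * CE e (restrict (\<lambda>_. x0) e)) - (\<Sum>e\<in>E. eta * (\<Sum>j\<in>e. lam e j x0))"
      by (rule sum_subtractf)
    moreover have "(\<Sum>e\<in>E. - eta * CE e (restrict (\<lambda>_. x0) e)) = eta * (\<Sum>e\<in>E. - CE e (restrict (\<lambda>_. x0) e))"
      by (simp add: sum_distrib_left)
    moreover have "(\<Sum>e\<in>E. eta * (\<Sum>j\<in>e. lam e j x0)) = eta * P"
      by (simp add: sum_distrib_left[symmetric] P_def)
    ultimately show ?thesis by simp
  qed
  have "(\<Sum>j\<in>V. - CV j x0) + P \<le> (1/eta) * (\<Sum>j\<in>V. ln (\<Sum>x\<in>X. node_pot eta E CV lam j x))"
    using A eta by (simp add: field_simps)
  moreover have "(\<Sum>e\<in>E. - CE e (restrict (\<lambda>_. x0) e)) - P \<le> (1/eta) * (\<Sum>e\<in>E. ln (\<Sum>xe\<in>edge_labels X e. edge_pot eta CE lam e xe))"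
    using Bd eta by (simp add: field_simps)
  ultimately show ?thesis unfolding Ldual_def by linarith
qed


lemma block_seqs_Suc_sum:
  fixes f :: "('v set \<times> 'v) list \<Rightarrow> real"
  assumes fin: "finite (Blocks E)"
  shows "(\<Sum>bs\<in>block_seqs E (Suc K). f bs) = (\<Sum>b\<in>Blocks E. \<Sum>bs\<in>block_seqs E K. f (b # bs))"
proof -
  have finS: "finite (block_seqs E K)"
    using finite_lists_length_eq[OF fin, of K] unfolding block_seqs_def by (simp add: conj_commute)
  have eq: "block_seqs E (Suc K) = (\<lambda>(b, bs). b # bs) ` (Blocks E \<times> block_seqs E K)"
  proof (rule set_eqI)
    fix xs show "xs \<in> block_seqs E (Suc K) \<longleftrightarrow> xs \<in> (\<lambda>(b, bs). b # bs) ` (Blocks E \<times> block_seqs E K)"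
      by (cases xs) (auto simp: block_seqs_def)
  qed
  have inj: "inj_on (\<lambda>(b, bs). b # bs) (Blocks E \<times> block_seqs E K)"
    by (auto simp: inj_on_def)
  show ?thesis unfolding eq sum.reindex[OF inj]
    by (simp add: sum.cartesian_product prod.case_distrib)
qed

lemma run_bound:
  assumes finV: "finite V" and finE: "finite E" and eV: "\<forall>e\<in>E. e \<subseteq> V"
    and finX: "finite X" and Xne: "X \<noteq> {}" and eta: "eta > 0"
    and finB: "finite (Blocks E)" and n: "n = card (Blocks E)"
  shows "(\<Sum>bs\<in>block_seqs E K. \<Sum>k<K. slack_obj eta E X CV CE (emp_run eta E X CV CE lam (take k bs)))
     \<le> 4 * eta * n * (n ^ K * Ldual eta V E X CV CE lam
          - (\<Sum>bs\<in>block_seqs E K. Ldual eta V E X CV CE (emp_run eta E X CV CE lam bs)))"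
proof (induction K arbitrary: lam)
  case 0
  have "block_seqs E 0 = {[]}" by (auto simp: block_seqs_def)
  then show ?case by simp
next
  case (Suc K)
  let ?L = "Ldual eta V E X CV CE"
  let ?sl = "slack_obj eta E X CV CE"
  let ?u = "emp_update eta E X CV CE lam"
  let ?run = "emp_run eta E X CV CE"
  have cardS: "card (block_seqs E K) = n ^ K"
    using card_lists_length_eq[OF finB, of K] n unfolding block_seqs_def by (simp add: conj_commute)
  have step: "(\<Sum>b\<in>Blocks E. ?L (?u b)) \<le> n * ?L lam - ?sl lam / (4 * eta)"
  proof -
    have "(\<Sum>b\<in>Blocks E. ?L (?u b)) \<le> (\<Sum>b\<in>Blocks E. ?L lam - (case b of (e, i) \<Rightarrow> (\<Sum>x\<in>X. \<bar>slack eta E X CV CE lam e i x\<bar>)\<^sup>2) / (4 * eta))"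
    proof (rule sum_mono)
      fix b assume b: "b \<in> Blocks E"
      obtain e i where bei: "b = (e, i)" by (cases b)
      have "e \<in> E" "i \<in> e" using b bei by (auto simp: Blocks_def)
      from emp_step[OF finV finE eV finX Xne eta this, of CV CE lam]
      show "?L (?u b) \<le> ?L lam - (case b of (e, i) \<Rightarrow> (\<Sum>x\<in>X. \<bar>slack eta E X CV CE lam e i x\<bar>)\<^sup>2) / (4 * eta)"
        by (simp add: bei)
    qed
    also have "\<dots> = n * ?L lam - ?sl lam / (4 * eta)"
      by (simp add: sum_subtractf sum_divide_distrib[symmetric] slack_obj_def n)
    finally show ?thesis .
  qed
  have "(\<Sum>bs\<in>block_seqs E (Suc K). \<Sum>k<Suc K. ?sl (?run lam (take k bs)))
      = (\<Sum>b\<in>Blocks E. \<Sum>bs\<in>block_seqs E K. ?sl lam + (\<Sum>k<K. ?sl (?run (?u b) (take k bs))))"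
    unfolding block_seqs_Suc_sum[OF finB] sum.lessThan_Suc_shift by simp
  also have "\<dots> = (\<Sum>b\<in>Blocks E. n ^ K * ?sl lam + (\<Sum>bs\<in>block_seqs E K. \<Sum>k<K. ?sl (?run (?u b) (take k bs))))"
    by (simp add: sum.distrib cardS)
  also have "\<dots> \<le> (\<Sum>b\<in>Blocks E. n ^ K * ?sl lam + 4 * eta * n * (n ^ K * ?L (?u b)
          - (\<Sum>bs\<in>block_seqs E K. ?L (?run (?u b) bs))))"
    by (intro sum_mono add_left_mono) (use Suc.IH in simp)
  also have "\<dots> = n ^ Suc K * ?sl lam + 4 * eta * n * n ^ K * (\<Sum>b\<in>Blocks E. ?L (?u b))
      - 4 * eta * n * (\<Sum>bs\<in>block_seqs E (Suc K). ?L (?run lam bs))"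
    unfolding block_seqs_Suc_sum[OF finB]
    by (simp add: sum.distrib sum_subtractf sum_distrib_left n[symmetric] algebra_simps)
  also have "\<dots> \<le> n ^ Suc K * ?sl lam + 4 * eta * n * n ^ K * (n * ?L lam - ?sl lam / (4 * eta))
      - 4 * eta * n * (\<Sum>bs\<in>block_seqs E (Suc K). ?L (?run lam bs))"
    using step eta by (intro diff_right_mono add_left_mono mult_left_mono) auto
  also have "\<dots> = 4 * eta * n * (n ^ Suc K * ?L lam - (\<Sum>bs\<in>block_seqs E (Suc K). ?L (?run lam bs)))"
    using eta by (simp add: field_simps)
  finally show ?case by simp
qed

theorem lemma8:
  fixes V :: "'v set" and E :: "'v set set" and X :: "'l set"
    and CV :: "'v \<Rightarrow> 'l \<Rightarrow> real" and CE :: "'v set \<Rightarrow> ('v \<Rightarrow> 'l) \<Rightarrow> real"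
    and eta :: real and K :: nat
    and sel :: "('v set \<times> 'v) list \<Rightarrow> nat"
  assumes finV: "finite V"
    and edges: "\<forall>e\<in>E. e \<subseteq> V \<and> card e = 2"
    and cover: "\<forall>i\<in>V. \<exists>e\<in>E. i \<in> e"
    and finX: "finite X" and cardX: "card X \<ge> 2"
    and eta: "eta > 0" and K: "K \<ge> 1"
    and sel_range: "\<forall>bs \<in> block_seqs E K. sel bs \<le> K"
    and sel_argmin: "\<forall>bs \<in> block_seqs E K. \<forall>k \<le> K.
          slack_obj eta E X CV CE (iterate eta E X CV CE bs (sel bs))
            \<le> slack_obj eta E X CV CE (iterate eta E X CV CE bs k)"
  shows "measure_pmf.expectation (pmf_of_set (block_seqs E K))
           (\<lambda>bs. slack_obj eta E X CV CE (iterate eta E X CV CE bs (sel bs)))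
         \<le> 8 * real (card E) * eta
             * (Ldual eta V E X CV CE (\<lambda>_ _ _. 0) - (INF lam. Ldual eta V E X CV CE lam))
             / real K"
proof -
  let ?L = "Ldual eta V E X CV CE"
  let ?sl = "slack_obj eta E X CV CE"
  have eV: "\<forall>e\<in>E. e \<subseteq> V" using edges by blast
  have finE: "finite E" using finite_subset[of E "Pow V"] eV finV by auto
  have Xne: "X \<noteq> {}" using cardX by auto
  then obtain x0 where x0: "x0 \<in> X" by blast
  show ?thesis
  proof (cases "E = {}")
    case True
    then have "\<And>lam. ?sl lam = 0" by (simp add: slack_obj_def Blocks_def)
    then show ?thesis using True by simp
  next
    case False
    have BS: "Blocks E = Sigma E (\<lambda>e. e)" by (auto simp: Blocks_def)
    have fine: "\<forall>e\<in>E. finite e" using eV finV finite_subset by blast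
    have finB: "finite (Blocks E)" unfolding BS using finE fine by blast
    have cardB: "card (Blocks E) = 2 * card E"
      unfolding BS using card_SigmaI[OF finE, of "\<lambda>e. e"] fine edges by simp
    define n where "n = card (Blocks E)"
    have npos: "n > 0" using cardB False finE n_def by auto
    define S where "S = block_seqs E K"
    have finS: "finite S"
      using finite_lists_length_eq[OF finB, of K] unfolding S_def block_seqs_def by (simp add: conj_commute)
    have cardS: "card S = n ^ K"
      using card_lists_length_eq[OF finB, of K] unfolding S_def block_seqs_def n_def by (simp add: conj_commute)
    have Sne: "S \<noteq> {}" using cardS npos by auto
    have bdd: "bdd_below (range ?L)"
      using Ldual_lower[OF finV finE eV finX x0 eta, of CV CE] by (auto intro!: bdd_belowI[where m="(\<Sum>j\<in>V. - CV j x0) + (\<Sum>e\<in>E. - CE e (restrict (\<lambda>_. x0) e))"])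
    define D where "D = ?L (\<lambda>_ _ _. 0) - (INF lam. ?L lam)"
    define f where "f = (\<lambda>bs. ?sl (iterate eta E X CV CE bs (sel bs)))"
    have perbs: "real K * f bs \<le> (\<Sum>k<K. ?sl (emp_run eta E X CV CE (\<lambda>_ _ _. 0) (take k bs)))"
      if bs: "bs \<in> S" for bs
    proof -
      have "(\<Sum>k<K. f bs) \<le> (\<Sum>k<K. ?sl (emp_run eta E X CV CE (\<lambda>_ _ _. 0) (take k bs)))"
        using sel_argmin bs unfolding S_def f_def iterate_def by (intro sum_mono) auto
      then show ?thesis by simp
    qed
    have "real K * (\<Sum>bs\<in>S. f bs) \<le> (\<Sum>bs\<in>S. \<Sum>k<K. ?sl (emp_run eta E X CV CE (\<lambda>_ _ _. 0) (take k bs)))"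
      unfolding sum_distrib_left using perbs by (rule sum_mono)
    also have "\<dots> \<le> 4 * eta * n * (n ^ K * ?L (\<lambda>_ _ _. 0)
          - (\<Sum>bs\<in>S. ?L (emp_run eta E X CV CE (\<lambda>_ _ _. 0) bs)))"
      unfolding S_def using run_bound[OF finV finE eV finX Xne eta finB n_def, where CV=CV and CE=CE and K=K and lam="\<lambda>_ _ _. 0"] by simp
    also have "\<dots> \<le> 4 * eta * n * (n ^ K * ?L (\<lambda>_ _ _. 0) - n ^ K * (INF lam. ?L lam))"
    proof -
      have "(\<Sum>bs\<in>S. (INF lam. ?L lam)) \<le> (\<Sum>bs\<in>S. ?L (emp_run eta E X CV CE (\<lambda>_ _ _. 0) bs))"
        by (intro sum_mono cINF_lower[OF bdd]) auto
      then have "n ^ K * (INF lam. ?L lam) \<le> (\<Sum>bs\<in>S. ?L (emp_run eta E X CV CE (\<lambda>_ _ _. 0) bs))"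
        using cardS by simp
      then show ?thesis using eta by (intro mult_left_mono) auto
    qed
    also have "\<dots> = real K * (4 * eta * n * D / K) * n ^ K"
      using K by (simp add: D_def field_simps)
    finally have main: "real K * (\<Sum>bs\<in>S. f bs) \<le> real K * (4 * eta * n * D / K) * n ^ K" .
    have "(\<Sum>bs\<in>S. f bs) \<le> (4 * eta * n * D / K) * n ^ K"
    proof -
      have Kp: "real K > 0" using K by simp
      have "real K * (\<Sum>bs\<in>S. f bs) \<le> real K * ((4 * eta * n * D / K) * n ^ K)"
        using main by (simp only: mult.assoc)
      then show ?thesis using mult_le_cancel_left_pos[OF Kp] by blast
    qed
    then have "(\<Sum>bs\<in>S. f bs) / card S \<le> 4 * eta * n * D / K"
      using cardS npos by (simp add: divide_le_eq)
    then show ?thesis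
      unfolding S_def[symmetric] f_def[symmetric] integral_pmf_of_set[OF Sne finS] D_def[symmetric]
      using cardB n_def by (simp add: mult_ac)
  qed
qed

end
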